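(* Let $f_j(x,t)$ ($0\le j\le n+1$), $\psi_l(x,t)$, $\varphi_m(x,t)$ ($0\le l,m\le n$) be a compatible local solution of the two autonomous systems of ODEs (in $t$ and in $x$) described in the context, where the functions $a,b,c,d$ appearing in them are given by $$a=\frac{\psi_n}{f_{n+1}},\qquad b=-\frac{\varphi_n}{f_{n+1}},\qquad c=2i\left(\frac{\psi_nf_n}{f^2_{n+1}}-\frac{\psi_{n-1}}{f_{n+1}}\right),\qquad d=2i\left(\frac{\varphi_nf_n}{f^2_{n+1}}-\frac{\varphi_{n-1}}{f_{n+1}}\right).$$ Then the functions $a(x,t)$ and $b(x,t)$ are a local, infinitely differentiable in $x$ and $t$, solution of the nonlinear system $$i\dot a+a''+2a^2b=0,\qquad i\dot b-b''-2b^2a=0,$$ where the dot denotes $\partial/\partial t$ and the prime denotes $\partial/\partial x$.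
   Context: Fix $n\in\mathbb{N}$. One seeks polynomial-in-$z$ solutions $f(x,t,z)=\sum_{j=0}^{n+1}f_j(x,t)z^j$, $\psi(x,t,z)=\sum_{j=0}^{n}\psi_j(x,t)z^j$, $\varphi(x,t,z)=\sum_{j=0}^{n}\varphi_j(x,t)z^j$ of the linear systems $\dot f=(d+2izb)\psi-(c-2iza)\varphi$, $\dot\psi=-2(c-2iza)f-2i(2z^2-ab)\psi$, $\dot\varphi=2(d+2izb)f+2i(2z^2-ab)\varphi$, and $f'=ib\psi+ia\varphi$, $\psi'=2iaf-2iz\psi$, $\varphi'=2ibf+2iz\varphi$, with dot $=\partial_t$ and prime $=\partial_x$. In terms of coefficients (with the convention $f_j,\psi_l,\varphi_m=0$ for negative indices and for $j>n+1$, $l,m>n$) these become the $t$-system $\dot f_j=d\psi_j-c\varphi_j+2ib\psi_{j-1}+2ia\varphi_{j-1}$ ($0\le j\le n+1$), $\dot\psi_l=-2cf_l+4iaf_{l-1}+2iab\psi_l-4i\psi_{l-2}$ ($0\le l\le n$), $\dot\varphi_m=2df_m+4ibf_{m-1}-2iab\varphi_m+4i\varphi_{m-2}$ ($0\le m\le n$), and the $x$-system $f_j'=ib\psi_j+ia\varphi_j$ ($0\le j\le n+1$), $\psi_l'=2iaf_l-2i\psi_{l-1}$ ($0\le l\le n$), $\varphi_m'=2ibf_m+2i\varphi_{m-1}$ ($0\le m\le n$). Requiring polynomial solutions forces $a,b,c,d$ to be given by the formulas in the claim; substituting them, both systems become closed autonomous ODE systems in the $N+1=3n+2$ unknowns $(f_0,\dots,f_{n+1},\psi_0,\dots,\psi_n,\varphi_0,\dots,\varphi_n)$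 with polynomial right-hand sides. The two systems satisfy the Frobenius compatibility conditions, so they admit a common (compatible) local solution. A consequence of the systems is that $f_{n+1}$ is constant in $x$ and $t$. *)

theory Defs
  imports "HOL-Analysis.Analysis"
begin

text \<open>Points of the (x,t)-plane are pairs p = (x,t) :: real \<times> real; all unknowns are
complex valued.  The unknowns f_0..f_{n+1}, psi_0..psi_n, phi_0..phi_n are given as
F, P, Q :: nat \<Rightarrow> real \<times> real \<Rightarrow> complex (only the indices in range matter).\<close>

definition ext :: "nat \<Rightarrow> (nat \<Rightarrow> 'a \<Rightarrow> complex) \<Rightarrow> int \<Rightarrow> 'a \<Rightarrow> complex" where
  "ext N g j p = (if 0 \<le> j \<and> j \<le> int N then g (nat j) p else 0)"

type_synonym field2 = "nat \<Rightarrow> real \<times> real \<Rightarrow> complex"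

definition coef_a :: "nat \<Rightarrow> field2 \<Rightarrow> field2 \<Rightarrow> field2 \<Rightarrow> real \<times> real \<Rightarrow> complex" where
  "coef_a n F P Q p = P n p / F (n+1) p"

definition coef_b :: "nat \<Rightarrow> field2 \<Rightarrow> field2 \<Rightarrow> field2 \<Rightarrow> real \<times> real \<Rightarrow> complex" where
  "coef_b n F P Q p = - (Q n p / F (n+1) p)"

definition coef_c :: "nat \<Rightarrow> field2 \<Rightarrow> field2 \<Rightarrow> field2 \<Rightarrow> real \<times> real \<Rightarrow> complex" where
  "coef_c n F P Q p = 2 * \<i> * (P n p * F n p / (F (n+1) p)^2 - ext n P (int n - 1) p / F (n+1) p)"

definition coef_d :: "nat \<Rightarrow> field2 \<Rightarrow> field2 \<Rightarrow> field2 \<Rightarrow> real \<times> real \<Rightarrow> complex" where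
  "coef_d n F P Q p = 2 * \<i> * (Q n p * F n p / (F (n+1) p)^2 - ext n Q (int n - 1) p / F (n+1) p)"

definition tF :: "nat \<Rightarrow> field2 \<Rightarrow> field2 \<Rightarrow> field2 \<Rightarrow> nat \<Rightarrow> real \<times> real \<Rightarrow> complex" where
  "tF n F P Q j p =
     (let a = coef_a n F P Q p; b = coef_b n F P Q p; c = coef_c n F P Q p; d = coef_d n F P Q p;
          ps = (\<lambda>k. ext n P k p); ph = (\<lambda>k. ext n Q k p)
      in d * ps (int j) - c * ph (int j) + 2*\<i>*b * ps (int j - 1) + 2*\<i>*a * ph (int j - 1))"

definition tP :: "nat \<Rightarrow> field2 \<Rightarrow> field2 \<Rightarrow> field2 \<Rightarrow> nat \<Rightarrow> real \<times> real \<Rightarrow> complex" where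
  "tP n F P Q l p =
     (let a = coef_a n F P Q p; b = coef_b n F P Q p; c = coef_c n F P Q p;
          f = (\<lambda>k. ext (n+1) F k p); ps = (\<lambda>k. ext n P k p)
      in - 2 * c * f (int l) + 4*\<i>*a * f (int l - 1) + 2*\<i>*a*b * ps (int l) - 4*\<i> * ps (int l - 2))"

definition tQ :: "nat \<Rightarrow> field2 \<Rightarrow> field2 \<Rightarrow> field2 \<Rightarrow> nat \<Rightarrow> real \<times> real \<Rightarrow> complex" where
  "tQ n F P Q m p =
     (let a = coef_a n F P Q p; b = coef_b n F P Q p; d = coef_d n F P Q p;
          f = (\<lambda>k. ext (n+1) F k p); ph = (\<lambda>k. ext n Q k p)
      in 2 * d * f (int m) + 4*\<i>*b * f (int m - 1) - 2*\<i>*a*b * ph (int m) + 4*\<i> * ph (int m - 2))"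

definition xF :: "nat \<Rightarrow> field2 \<Rightarrow> field2 \<Rightarrow> field2 \<Rightarrow> nat \<Rightarrow> real \<times> real \<Rightarrow> complex" where
  "xF n F P Q j p = \<i> * coef_b n F P Q p * ext n P (int j) p + \<i> * coef_a n F P Q p * ext n Q (int j) p"

definition xP :: "nat \<Rightarrow> field2 \<Rightarrow> field2 \<Rightarrow> field2 \<Rightarrow> nat \<Rightarrow> real \<times> real \<Rightarrow> complex" where
  "xP n F P Q l p = 2*\<i> * coef_a n F P Q p * ext (n+1) F (int l) p - 2*\<i> * ext n P (int l - 1) p"

definition xQ :: "nat \<Rightarrow> field2 \<Rightarrow> field2 \<Rightarrow> field2 \<Rightarrow> nat \<Rightarrow> real \<times> real \<Rightarrow> complex" where
  "xQ n F P Q m p = 2*\<i> * coef_b n F P Q p * ext (n+1) F (int m) p + 2*\<i> * ext n Q (int m - 1) p"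

definition has_partials :: "(real \<times> real \<Rightarrow> complex) \<Rightarrow> complex \<Rightarrow> complex \<Rightarrow> real \<times> real \<Rightarrow> bool" where
  "has_partials g gx gt p \<longleftrightarrow> (g has_derivative (\<lambda>h. fst h *\<^sub>R gx + snd h *\<^sub>R gt)) (at p)"

definition compatible_solution ::
  "nat \<Rightarrow> (real \<times> real) set \<Rightarrow> field2 \<Rightarrow> field2 \<Rightarrow> field2 \<Rightarrow> bool" where
  "compatible_solution n U F P Q \<longleftrightarrow>
     (\<forall>p\<in>U.
        (\<forall>j\<le>n+1. has_partials (F j) (xF n F P Q j p) (tF n F P Q j p) p) \<and>
        (\<forall>l\<le>n. has_partials (P l) (xP n F P Q l p) (tP n F P Q l p) p) \<and>
        (\<forall>m\<le>n. has_partials (Q m) (xQ n F P Q m p) (tQ n F P Q m p) p))"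

fun Ck_on :: "nat \<Rightarrow> (real \<times> real) set \<Rightarrow> (real \<times> real \<Rightarrow> complex) \<Rightarrow> bool" where
  "Ck_on 0 U g = continuous_on U g"
| "Ck_on (Suc k) U g =
     (\<exists>gx gt. (\<forall>p\<in>U. has_partials g (gx p) (gt p) p) \<and> Ck_on k U gx \<and> Ck_on k U gt)"

definition smooth_on2 :: "(real \<times> real) set \<Rightarrow> (real \<times> real \<Rightarrow> complex) \<Rightarrow> bool" where
  "smooth_on2 U g \<longleftrightarrow> (\<forall>k. Ck_on k U g)"

end

theory Submission
  imports Defs
begin


lemma hp_eq: "has_partials g gx gt p \<Longrightarrow> gx = gx' \<Longrightarrow> gt = gt' \<Longrightarrow> has_partials g gx' gt' p"
  by simp

lemma hp_const: "has_partials (\<lambda>p. c) 0 0 p"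
  unfolding has_partials_def by simp

lemma hp_add: "has_partials f fx ft p \<Longrightarrow> has_partials g gx gt p \<Longrightarrow>
   has_partials (\<lambda>p. f p + g p) (fx + gx) (ft + gt) p"
  unfolding has_partials_def
  by (rule has_derivative_eq_rhs[OF has_derivative_add], assumption, assumption) (auto simp: fun_eq_iff algebra_simps scaleR_add_right)

lemma hp_mult: "has_partials f fx ft p \<Longrightarrow> has_partials g gx gt p \<Longrightarrow>
   has_partials (\<lambda>p. f p * g p) (fx * g p + f p * gx) (ft * g p + f p * gt) p"
  unfolding has_partials_def
  by (rule has_derivative_eq_rhs[OF has_derivative_mult], assumption, assumption) (auto simp: fun_eq_iff algebra_simps scaleR_conv_of_real)

lemma hp_inverse: assumes A: "has_partials g gx gt p" and B: "g p \<noteq> 0" shows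
   "has_partials (\<lambda>p. inverse (g p)) (- (inverse (g p) * gx * inverse (g p))) (- (inverse (g p) * gt * inverse (g p))) p"
  unfolding has_partials_def
  by (rule has_derivative_eq_rhs[OF Deriv.has_derivative_inverse[OF B A[unfolded has_partials_def]]]) (auto simp: fun_eq_iff algebra_simps scaleR_conv_of_real)

lemma hp_div0: assumes f: "has_partials f fx ft p" and g: "has_partials g 0 0 p" and nz: "g p \<noteq> 0"
  shows "has_partials (\<lambda>p. f p / g p) (fx / g p) (ft / g p) p"
proof -
  have "has_partials (\<lambda>p. f p * inverse (g p)) (fx * inverse (g p) + f p * (- (inverse (g p) * 0 * inverse (g p))))
     (ft * inverse (g p) + f p * (- (inverse (g p) * 0 * inverse (g p)))) p"
    by (rule hp_mult[OF f hp_inverse[OF g nz]])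
  then show ?thesis by (simp add: divide_inverse)
qed

lemma hp_sq0: assumes g: "has_partials g 0 0 p" shows "has_partials (\<lambda>p. (g p)^2) 0 0 p"
proof -
  have "has_partials (\<lambda>p. g p * g p) (0 * g p + g p * 0) (0 * g p + g p * 0) p"
    by (rule hp_mult[OF g g])
  then show ?thesis by (simp add: power2_eq_square)
qed

lemma hp_cmult: assumes f: "has_partials f fx ft p" shows "has_partials (\<lambda>p. c * f p) (c * fx) (c * ft) p"
proof -
  have "has_partials (\<lambda>p. c * f p) (0 * f p + c * fx) (0 * f p + c * ft) p"
    by (rule hp_mult[OF hp_const f])
  then show ?thesis by simp
qed

lemma hp_uminus: assumes f: "has_partials f fx ft p" shows "has_partials (\<lambda>p. - f p) (- fx) (- ft) p"
proof -
  have "has_partials (\<lambda>p. (-1) * f p) ((-1) * fx) ((-1) * ft) p"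
    by (rule hp_cmult[OF f])
  then show ?thesis by simp
qed

lemma hp_diff: assumes f: "has_partials f fx ft p" and g: "has_partials g gx gt p" shows
   "has_partials (\<lambda>p. f p - g p) (fx - gx) (ft - gt) p"
proof -
  have "has_partials (\<lambda>p. f p + - g p) (fx + - gx) (ft + - gt) p"
    by (rule hp_add[OF f hp_uminus[OF g]])
  then show ?thesis by simp
qed

lemma hp_slice_x: "has_partials g gx gt (x, t) \<Longrightarrow> ((\<lambda>y. g (y, t)) has_vector_derivative gx) (at x)"
proof -
  assume h: "has_partials g gx gt (x, t)"
  have i: "((\<lambda>y. (y, t)) has_derivative (\<lambda>h. (h, 0))) (at x)"
    by (auto intro!: derivative_eq_intros)
  have "((\<lambda>y. g (y, t)) has_derivative (\<lambda>h. fst (h,0::real) *\<^sub>R gx + snd (h,0::real) *\<^sub>R gt)) (at x)"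
    using has_derivative_compose[OF i h[unfolded has_partials_def]] by (simp add: o_def)
  then show ?thesis unfolding has_vector_derivative_def by simp
qed

lemma hp_slice_t: "has_partials g gx gt (x, t) \<Longrightarrow> ((\<lambda>s. g (x, s)) has_vector_derivative gt) (at t)"
proof -
  assume h: "has_partials g gx gt (x, t)"
  have i: "((\<lambda>s. (x, s)) has_derivative (\<lambda>h. (0, h))) (at t)"
    by (auto intro!: derivative_eq_intros)
  have "((\<lambda>s. g (x, s)) has_derivative (\<lambda>h. fst (0::real,h) *\<^sub>R gx + snd (0::real,h) *\<^sub>R gt)) (at t)"
    using has_derivative_compose[OF i h[unfolded has_partials_def]] by (simp add: o_def)
  then show ?thesis unfolding has_vector_derivative_def by simp
qed

lemma hp_cont: "has_partials g gx gt p \<Longrightarrow> isCont g p"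
  unfolding has_partials_def using has_derivative_continuous by blast

lemma Ck_mono: "Ck_on (Suc k) U g \<Longrightarrow> Ck_on k U g"
proof (induction k arbitrary: g)
  case 0
  then show ?case by (auto intro!: continuous_at_imp_continuous_on dest: hp_cont)
next
  case (Suc k)
  from Suc.prems obtain gx gt where
    g: "\<forall>p\<in>U. has_partials g (gx p) (gt p) p" "Ck_on (Suc k) U gx" "Ck_on (Suc k) U gt"
    by (simp only: Ck_on.simps) blast
  show ?case unfolding Ck_on.simps using g Suc.IH by blast
qed

lemma Ck_const: "Ck_on k U (\<lambda>p. c)"
proof (induction k arbitrary: c)
  case 0 then show ?case by simp
next
  case (Suc k) then show ?case using hp_const by (auto intro!: exI[of _ "\<lambda>p. 0"])
qed

lemma Ck_add: "Ck_on k U f \<Longrightarrow> Ck_on k U g \<Longrightarrow> Ck_on k U (\<lambda>p. f p + g p)"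
proof (induction k arbitrary: f g)
  case 0 then show ?case by (auto intro: continuous_on_add)
next
  case (Suc k)
  from Suc.prems obtain fx ft gx gt where
    f: "\<forall>p\<in>U. has_partials f (fx p) (ft p) p" "Ck_on k U fx" "Ck_on k U ft" and
    g: "\<forall>p\<in>U. has_partials g (gx p) (gt p) p" "Ck_on k U gx" "Ck_on k U gt" by auto
  show ?case
    unfolding Ck_on.simps
    apply (rule exI[of _ "\<lambda>p. fx p + gx p"], rule exI[of _ "\<lambda>p. ft p + gt p"])
    apply (intro conjI ballI)
    subgoal for p using f(1) g(1) hp_add by blast
    using f g Suc.IH by auto
qed

lemma Ck_mult: "Ck_on k U f \<Longrightarrow> Ck_on k U g \<Longrightarrow> Ck_on k U (\<lambda>p. f p * g p)"
proof (induction k arbitrary: f g)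
  case 0 then show ?case by (auto intro: continuous_on_mult)
next
  case (Suc k)
  from Suc.prems obtain fx ft gx gt where
    f: "\<forall>p\<in>U. has_partials f (fx p) (ft p) p" "Ck_on k U fx" "Ck_on k U ft" and
    g: "\<forall>p\<in>U. has_partials g (gx p) (gt p) p" "Ck_on k U gx" "Ck_on k U gt" by auto
  have fk: "Ck_on k U f" "Ck_on k U g" using Ck_mono[OF Suc.prems(1)] Ck_mono[OF Suc.prems(2)] by auto
  show ?case
    unfolding Ck_on.simps
    apply (rule exI[of _ "\<lambda>p. fx p * g p + f p * gx p"], rule exI[of _ "\<lambda>p. ft p * g p + f p * gt p"])
    apply (intro conjI ballI)
    subgoal for p by (rule hp_mult[OF f(1)[rule_format] g(1)[rule_format]])
     apply (rule Ck_add[OF Suc.IH[OF f(2) fk(2)] Suc.IH[OF fk(1) g(2)]])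
    apply (rule Ck_add[OF Suc.IH[OF f(3) fk(2)] Suc.IH[OF fk(1) g(3)]])
    done
qed

lemma Ck_uminus: "Ck_on k U f \<Longrightarrow> Ck_on k U (\<lambda>p. - f p)"
proof -
  assume "Ck_on k U f"
  from Ck_mult[OF Ck_const[of k U "-1::complex"] this] show ?thesis by simp
qed

lemma Ck_inverse: "Ck_on k U g \<Longrightarrow> \<forall>p\<in>U. g p \<noteq> 0 \<Longrightarrow> Ck_on k U (\<lambda>p. inverse (g p))"
proof (induction k arbitrary: g)
  case 0 then show ?case by (auto intro: continuous_on_inverse)
next
  case (Suc k)
  from Suc.prems obtain gx gt where
    g: "\<forall>p\<in>U. has_partials g (gx p) (gt p) p" "Ck_on k U gx" "Ck_on k U gt" by auto
  have gk: "Ck_on k U (\<lambda>p. inverse (g p))" using Suc.IH[OF Ck_mono[OF Suc.prems(1)] Suc.prems(2)] .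
  show ?case
    unfolding Ck_on.simps
    apply (rule exI[of _ "\<lambda>p. - (inverse (g p) * gx p * inverse (g p))"],
           rule exI[of _ "\<lambda>p. - (inverse (g p) * gt p * inverse (g p))"])
    apply (intro conjI ballI)
    subgoal for p by (rule hp_inverse[OF g(1)[rule_format] Suc.prems(2)[rule_format]])
     apply (rule Ck_uminus[OF Ck_mult[OF Ck_mult[OF gk g(2)] gk]])
    apply (rule Ck_uminus[OF Ck_mult[OF Ck_mult[OF gk g(3)] gk]])
    done
qed


lemma Ck_diff: "Ck_on k U f \<Longrightarrow> Ck_on k U g \<Longrightarrow> Ck_on k U (\<lambda>p. f p - g p)"
proof -
  assume a: "Ck_on k U f" "Ck_on k U g"
  from Ck_add[OF a(1) Ck_uminus[OF a(2)]] show ?thesis by simp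
qed

lemma Ck_divide: "Ck_on k U f \<Longrightarrow> Ck_on k U g \<Longrightarrow> \<forall>p\<in>U. g p \<noteq> 0 \<Longrightarrow> Ck_on k U (\<lambda>p. f p / g p)"
proof -
  assume a: "Ck_on k U f" "Ck_on k U g" "\<forall>p\<in>U. g p \<noteq> 0"
  from Ck_mult[OF a(1) Ck_inverse[OF a(2,3)]] show ?thesis by (simp add: divide_inverse)
qed

lemma Ck_power: "Ck_on k U f \<Longrightarrow> Ck_on k U (\<lambda>p. f p ^ m)"
proof (induction m)
  case 0 then show ?case using Ck_const[of k U 1] by simp
next
  case (Suc m)
  have "Ck_on k U (\<lambda>p. f p * f p ^ m)" by (rule Ck_mult[OF Suc.prems Suc.IH[OF Suc.prems]])
  then show ?case by simp
qed

lemma Ck_ext: "(\<And>i. i \<le> N \<Longrightarrow> Ck_on k U (g i)) \<Longrightarrow> Ck_on k U (\<lambda>p. ext N g j p)"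
proof (cases "0 \<le> j \<and> j \<le> int N")
  case True
  assume h: "\<And>i. i \<le> N \<Longrightarrow> Ck_on k U (g i)"
  have "nat j \<le> N" using True by auto
  from h[OF this] True show ?thesis unfolding ext_def by simp
next
  case False
  then have "(\<lambda>p. ext N g j p) = (\<lambda>p. 0)" unfolding ext_def fun_eq_iff by auto
  then show ?thesis using Ck_const[of k U 0] by simp
qed

lemmas Ck_intros = Ck_add Ck_mult Ck_diff Ck_uminus Ck_power Ck_ext Ck_const



lemma all_Ck:
  assumes nz: "\<forall>p\<in>U. F (n+1) p \<noteq> 0" and cs: "compatible_solution n U F P Q"
  shows "(\<forall>j\<le>n+1. Ck_on k U (F j)) \<and> (\<forall>l\<le>n. Ck_on k U (P l)) \<and> (\<forall>m\<le>n. Ck_on k U (Q m))"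
proof (induction k)
  case 0
  have "\<forall>p\<in>U. (\<forall>j\<le>n+1. isCont (F j) p) \<and> (\<forall>l\<le>n. isCont (P l) p) \<and> (\<forall>m\<le>n. isCont (Q m) p)"
    using cs unfolding compatible_solution_def by (meson hp_cont)
  then show ?case by (auto intro!: continuous_at_imp_continuous_on)
next
  case (Suc k)
  have IF: "\<And>j. j \<le> n+1 \<Longrightarrow> Ck_on k U (F j)" and IP: "\<And>l. l \<le> n \<Longrightarrow> Ck_on k U (P l)"
    and IQ: "\<And>m. m \<le> n \<Longrightarrow> Ck_on k U (Q m)" using Suc.IH by auto
  have IFn: "Ck_on k U (F n)" "Ck_on k U (F (n+1))" using IF by auto
  have IPn: "Ck_on k U (P n)" "Ck_on k U (Q n)" using IP IQ by auto
  have nzS: "\<forall>p\<in>U. F (Suc n) p \<noteq> 0" using nz by simp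
  have nz2: "\<forall>p\<in>U. (F (n+1) p)^2 \<noteq> 0" using nz by simp
  note R = Ck_add Ck_mult Ck_diff Ck_uminus Ck_divide Ck_power Ck_ext Ck_const
  have A1: "Ck_on k U (\<lambda>p. xF n F P Q j p)" for j
    unfolding xF_def tF_def xP_def tP_def xQ_def tQ_def coef_a_def coef_b_def coef_c_def coef_d_def Let_def
    apply (intro R) by (simp_all add: IFn IPn nzS IF IP IQ)
  have A2: "Ck_on k U (\<lambda>p. tF n F P Q j p)" for j
    unfolding xF_def tF_def xP_def tP_def xQ_def tQ_def coef_a_def coef_b_def coef_c_def coef_d_def Let_def
    apply (intro R) by (simp_all add: IFn IPn nzS IF IP IQ)
  have A3: "Ck_on k U (\<lambda>p. xP n F P Q j p)" for j
    unfolding xF_def tF_def xP_def tP_def xQ_def tQ_def coef_a_def coef_b_def coef_c_def coef_d_def Let_def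
    apply (intro R) by (simp_all add: IFn IPn nzS IF IP IQ)
  have A4: "Ck_on k U (\<lambda>p. tP n F P Q j p)" for j
    unfolding xF_def tF_def xP_def tP_def xQ_def tQ_def coef_a_def coef_b_def coef_c_def coef_d_def Let_def
    apply (intro R) by (simp_all add: IFn IPn nzS IF IP IQ)
  have A5: "Ck_on k U (\<lambda>p. xQ n F P Q j p)" for j
    unfolding xF_def tF_def xP_def tP_def xQ_def tQ_def coef_a_def coef_b_def coef_c_def coef_d_def Let_def
    apply (intro R) by (simp_all add: IFn IPn nzS IF IP IQ)
  have A6: "Ck_on k U (\<lambda>p. tQ n F P Q j p)" for j
    unfolding xF_def tF_def xP_def tP_def xQ_def tQ_def coef_a_def coef_b_def coef_c_def coef_d_def Let_def
    apply (intro R) by (simp_all add: IFn IPn nzS IF IP IQ)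
  note A = A1 A2 A3 A4 A5 A6
  have cs': "\<And>p. p \<in> U \<Longrightarrow>
        (\<forall>j\<le>n+1. has_partials (F j) (xF n F P Q j p) (tF n F P Q j p) p) \<and>
        (\<forall>l\<le>n. has_partials (P l) (xP n F P Q l p) (tP n F P Q l p) p) \<and>
        (\<forall>m\<le>n. has_partials (Q m) (xQ n F P Q m p) (tQ n F P Q m p) p)"
    using cs unfolding compatible_solution_def by blast
  have hF: "\<And>p j. p \<in> U \<Longrightarrow> j \<le> n+1 \<Longrightarrow> has_partials (F j) (xF n F P Q j p) (tF n F P Q j p) p"
    and hP: "\<And>p j. p \<in> U \<Longrightarrow> j \<le> n \<Longrightarrow> has_partials (P j) (xP n F P Q j p) (tP n F P Q j p) p"
    and hQ: "\<And>p j. p \<in> U \<Longrightarrow> j \<le> n \<Longrightarrow> has_partials (Q j) (xQ n F P Q j p) (tQ n F P Q j p) p"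
    using cs' by auto
  show ?case
  proof (intro conjI allI impI)
    fix j assume that: "j \<le> n+1"
      show "Ck_on (Suc k) U (F j)"
      unfolding Ck_on.simps
      apply (rule exI[of _ "\<lambda>p. xF n F P Q j p"], rule exI[of _ "\<lambda>p. tF n F P Q j p"], intro conjI A ballI)
      using hF hP hQ that by auto
  next
    fix j assume that: "j \<le> n"
      show "Ck_on (Suc k) U (P j)"
      unfolding Ck_on.simps
      apply (rule exI[of _ "\<lambda>p. xP n F P Q j p"], rule exI[of _ "\<lambda>p. tP n F P Q j p"], intro conjI A ballI)
      using hF hP hQ that by auto
  next
    fix j assume that: "j \<le> n"
      show "Ck_on (Suc k) U (Q j)"
      unfolding Ck_on.simps
      apply (rule exI[of _ "\<lambda>p. xQ n F P Q j p"], rule exI[of _ "\<lambda>p. tQ n F P Q j p"], intro conjI A ballI)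
      using hF hP hQ that by auto
  qed
qed



lemma alg1:
  fixes Fp Fn Pn Qn Ea Eb Ga :: complex
  assumes "Fp \<noteq> 0"
  defines "a \<equiv> Pn/Fp" and "b \<equiv> -(Qn/Fp)"
  defines "c \<equiv> 2*\<i>*(Pn*Fn/Fp^2 - Ea/Fp)"
  defines "tPn \<equiv> -2*c*Fn + 4*\<i>*a*Ga + 2*\<i>*a*b*Pn - 4*\<i>*Eb"
  defines "xPn \<equiv> 2*\<i>*a*Fn - 2*\<i>*Ea"
  defines "xFn \<equiv> \<i>*b*Pn + \<i>*a*Qn"
  shows "\<i> * (tPn/Fp) + 2*\<i>*((xPn*Fn + Pn*xFn)/Fp^2 - (2*\<i>*a*Ga - 2*\<i>*Eb)/Fp) + 2*a^2*b = 0"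
  using assms(1) unfolding a_def b_def c_def tPn_def xPn_def xFn_def
  by (simp add: field_simps power2_eq_square)

lemma alg2:
  fixes Fp Fn Pn Qn Ea Eb Ga :: complex
  assumes "Fp \<noteq> 0"
  defines "a \<equiv> Pn/Fp" and "b \<equiv> -(Qn/Fp)"
  defines "d \<equiv> 2*\<i>*(Qn*Fn/Fp^2 - Ea/Fp)"
  defines "tQn \<equiv> 2*d*Fn + 4*\<i>*b*Ga - 2*\<i>*a*b*Qn + 4*\<i>*Eb"
  defines "xQn \<equiv> 2*\<i>*b*Fn + 2*\<i>*Ea"
  defines "xFn \<equiv> \<i>*b*Pn + \<i>*a*Qn"
  shows "\<i> * (-(tQn/Fp)) - 2*\<i>*((xQn*Fn + Qn*xFn)/Fp^2 - (2*\<i>*b*Ga + 2*\<i>*Eb)/Fp) - 2*b^2*a = 0"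
  using assms(1) unfolding a_def b_def d_def tQn_def xQn_def xFn_def
  by (simp add: field_simps power2_eq_square)

lemma ext_nat: "j \<le> N \<Longrightarrow> ext N g (int j) p = g j p"
  unfolding ext_def by simp

definition CX :: "nat \<Rightarrow> field2 \<Rightarrow> field2 \<Rightarrow> field2 \<Rightarrow> real \<times> real \<Rightarrow> complex" where
  "CX n F P Q p = 2*\<i>*((xP n F P Q n p * F n p + P n p * xF n F P Q n p)/(F (n+1) p)^2
     - (2*\<i>*coef_a n F P Q p * ext (n+1) F (int n - 1) p - 2*\<i>*ext n P (int n - 2) p)/F (n+1) p)"

definition DX :: "nat \<Rightarrow> field2 \<Rightarrow> field2 \<Rightarrow> field2 \<Rightarrow> real \<times> real \<Rightarrow> complex" where
  "DX n F P Q p = 2*\<i>*((xQ n F P Q n p * F n p + Q n p * xF n F P Q n p)/(F (n+1) p)^2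
     - (2*\<i>*coef_b n F P Q p * ext (n+1) F (int n - 1) p + 2*\<i>*ext n Q (int n - 2) p)/F (n+1) p)"

lemma hp_prev:
  assumes h: "\<And>l. l \<le> n \<Longrightarrow> has_partials (P l) (X l) (T l) p"
  shows "has_partials (\<lambda>q. ext n P (int n - 1) q) (if n = 0 then 0 else X (n - 1)) (if n = 0 then 0 else T (n - 1)) p"
proof (cases n)
  case 0
  then have "(\<lambda>q. ext n P (int n - 1) q) = (\<lambda>q. 0)" unfolding ext_def by simp
  then show ?thesis using hp_const[of 0 p] 0 by simp
next
  case (Suc m)
  then have "(\<lambda>q. ext n P (int n - 1) q) = P m" unfolding ext_def by (simp add: fun_eq_iff)
  then show ?thesis using h[of m] Suc by simp
qed

lemma pointwise:
  assumes nz: "F (n+1) p \<noteq> 0"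
    and hF: "\<And>j. j \<le> n+1 \<Longrightarrow> has_partials (F j) (xF n F P Q j p) (tF n F P Q j p) p"
    and hP: "\<And>l. l \<le> n \<Longrightarrow> has_partials (P l) (xP n F P Q l p) (tP n F P Q l p) p"
    and hQ: "\<And>m. m \<le> n \<Longrightarrow> has_partials (Q m) (xQ n F P Q m p) (tQ n F P Q m p) p"
  shows "has_partials (coef_a n F P Q) (coef_c n F P Q p) (tP n F P Q n p / F (n+1) p) p"
    "\<exists>ct. has_partials (coef_c n F P Q) (CX n F P Q p) ct p"
    "has_partials (coef_b n F P Q) (coef_d n F P Q p) (- (tQ n F P Q n p / F (n+1) p)) p"
    "\<exists>dt. has_partials (coef_d n F P Q) (DX n F P Q p) dt p"
    "\<i> * (tP n F P Q n p / F (n+1) p) + CX n F P Q p + 2 * (coef_a n F P Q p)^2 * coef_b n F P Q p = 0"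
    "\<i> * (- (tQ n F P Q n p / F (n+1) p)) - DX n F P Q p - 2 * (coef_b n F P Q p)^2 * coef_a n F P Q p = 0"
proof -
  have x0: "xF n F P Q (n+1) p = 0" unfolding xF_def ext_def by simp
  have t0: "tF n F P Q (n+1) p = 0" using nz unfolding tF_def ext_def coef_a_def coef_b_def Let_def
    by (simp add: field_simps)
  have F0: "has_partials (F (n+1)) 0 0 p" using hF[of "n+1"] x0 t0 by simp
  have ea: "coef_a n F P Q = (\<lambda>q. P n q / F (n+1) q)" by (simp add: fun_eq_iff coef_a_def)
  have eb: "coef_b n F P Q = (\<lambda>q. - (Q n q / F (n+1) q))" by (simp add: fun_eq_iff coef_b_def)
  have ec: "coef_c n F P Q = (\<lambda>q. 2 * \<i> * (P n q * F n q / (F (n+1) q)^2 - ext n P (int n - 1) q / F (n+1) q))"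
    by (simp add: fun_eq_iff coef_c_def)
  have ed: "coef_d n F P Q = (\<lambda>q. 2 * \<i> * (Q n q * F n q / (F (n+1) q)^2 - ext n Q (int n - 1) q / F (n+1) q))"
    by (simp add: fun_eq_iff coef_d_def)
  have Fn: "ext (n+1) F (int n) p = F n p" "ext n P (int n) p = P n p" "ext n Q (int n) p = Q n p" "ext (Suc n) F (int n) p = F n p"
    by (simp_all add: ext_nat)
  show "has_partials (coef_a n F P Q) (coef_c n F P Q p) (tP n F P Q n p / F (n+1) p) p"
    unfolding ea
    apply (rule hp_eq[OF hp_div0[OF hP[of n] F0 nz]])
    using nz by (simp_all add: xP_def coef_c_def coef_a_def Fn field_simps power2_eq_square)
  show "has_partials (coef_b n F P Q) (coef_d n F P Q p) (- (tQ n F P Q n p / F (n+1) p)) p"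
    unfolding eb
    apply (rule hp_eq[OF hp_uminus[OF hp_div0[OF hQ[of n] F0 nz]]])
    using nz by (simp_all add: xQ_def coef_d_def coef_b_def Fn field_simps power2_eq_square)
  have EP: "has_partials (\<lambda>q. ext n P (int n - 1) q) (2*\<i>*coef_a n F P Q p * ext (n+1) F (int n - 1) p - 2*\<i>*ext n P (int n - 2) p)
     (if n = 0 then 0 else tP n F P Q (n - 1) p) p"
    apply (rule hp_eq[OF hp_prev[OF hP]])
      apply simp
    by (cases n) (simp_all add: xP_def ext_def)
  have EQ: "has_partials (\<lambda>q. ext n Q (int n - 1) q) (2*\<i>*coef_b n F P Q p * ext (n+1) F (int n - 1) p + 2*\<i>*ext n Q (int n - 2) p)
     (if n = 0 then 0 else tQ n F P Q (n - 1) p) p"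
    apply (rule hp_eq[OF hp_prev[OF hQ]])
      apply simp
    by (cases n) (simp_all add: xQ_def ext_def)
  have nz2: "(F (n+1) p)^2 \<noteq> 0" using nz by simp
  show "\<exists>ct. has_partials (coef_c n F P Q) (CX n F P Q p) ct p"
    unfolding ec CX_def
    by (rule exI, rule hp_cmult[OF hp_diff[OF hp_div0[OF hp_mult[OF hP[of n] hF[of n]] hp_sq0[OF F0] nz2] hp_div0[OF EP F0 nz]]]) simp_all
  show "\<exists>dt. has_partials (coef_d n F P Q) (DX n F P Q p) dt p"
    unfolding ed DX_def
    by (rule exI, rule hp_cmult[OF hp_diff[OF hp_div0[OF hp_mult[OF hQ[of n] hF[of n]] hp_sq0[OF F0] nz2] hp_div0[OF EQ F0 nz]]]) simp_all
  show "\<i> * (tP n F P Q n p / F (n+1) p) + CX n F P Q p + 2 * (coef_a n F P Q p)^2 * coef_b n F P Q p = 0"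
    using alg1[OF nz, where Pn="P n p" and Qn="Q n p" and Fn="F n p" and Ea="ext n P (int n - 1) p" and Ga="ext (n+1) F (int n - 1) p" and Eb="ext n P (int n - 2) p"]
    unfolding CX_def tP_def xP_def xF_def coef_a_def coef_b_def coef_c_def Let_def Fn
    by (simp add: Fn)
  show "\<i> * (- (tQ n F P Q n p / F (n+1) p)) - DX n F P Q p - 2 * (coef_b n F P Q p)^2 * coef_a n F P Q p = 0"
    using alg2[OF nz, where Pn="P n p" and Qn="Q n p" and Fn="F n p" and Ea="ext n Q (int n - 1) p" and Ga="ext (n+1) F (int n - 1) p" and Eb="ext n Q (int n - 2) p"]
    unfolding DX_def tQ_def xQ_def xF_def coef_a_def coef_b_def coef_d_def Let_def Fn
    by (simp add: Fn)
qed

theorem theorem1: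
  fixes n :: nat and U :: "(real \<times> real) set" and F P Q :: field2
  assumes "open U"
    and "\<forall>p\<in>U. F (n+1) p \<noteq> 0"
    and "compatible_solution n U F P Q"
  defines "a \<equiv> coef_a n F P Q" and "b \<equiv> coef_b n F P Q"
  shows "smooth_on2 U a \<and> smooth_on2 U b \<and>
    (\<exists>ax axx adot bx bxx bdot. \<forall>x t. (x, t) \<in> U \<longrightarrow>
       ((\<lambda>y. a (y, t)) has_vector_derivative ax (x, t)) (at x) \<and>
       ((\<lambda>y. ax (y, t)) has_vector_derivative axx (x, t)) (at x) \<and>
       ((\<lambda>s. a (x, s)) has_vector_derivative adot (x, t)) (at t) \<and>
       ((\<lambda>y. b (y, t)) has_vector_derivative bx (x, t)) (at x) \<and>
       ((\<lambda>y. bx (y, t)) has_vector_derivative bxx (x, t)) (at x) \<and>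
       ((\<lambda>s. b (x, s)) has_vector_derivative bdot (x, t)) (at t) \<and>
       \<i> * adot (x, t) + axx (x, t) + 2 * (a (x, t))^2 * b (x, t) = 0 \<and>
       \<i> * bdot (x, t) - bxx (x, t) - 2 * (b (x, t))^2 * a (x, t) = 0)"
  proof -
  note nz = assms(2) and cs = assms(3)
  have hpts: "\<And>p. p \<in> U \<Longrightarrow>
        (\<forall>j\<le>n+1. has_partials (F j) (xF n F P Q j p) (tF n F P Q j p) p) \<and>
        (\<forall>l\<le>n. has_partials (P l) (xP n F P Q l p) (tP n F P Q l p) p) \<and>
        (\<forall>m\<le>n. has_partials (Q m) (xQ n F P Q m p) (tQ n F P Q m p) p)"
    using cs unfolding compatible_solution_def by blast
  have PW: "has_partials (coef_a n F P Q) (coef_c n F P Q p) (tP n F P Q n p / F (n+1) p) p \<and>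
    (\<exists>ct. has_partials (coef_c n F P Q) (CX n F P Q p) ct p) \<and>
    has_partials (coef_b n F P Q) (coef_d n F P Q p) (- (tQ n F P Q n p / F (n+1) p)) p \<and>
    (\<exists>dt. has_partials (coef_d n F P Q) (DX n F P Q p) dt p) \<and>
    \<i> * (tP n F P Q n p / F (n+1) p) + CX n F P Q p + 2 * (coef_a n F P Q p)^2 * coef_b n F P Q p = 0 \<and>
    \<i> * (- (tQ n F P Q n p / F (n+1) p)) - DX n F P Q p - 2 * (coef_b n F P Q p)^2 * coef_a n F P Q p = 0"
    if "p \<in> U" for p
  proof -
    have h: "\<And>j. j \<le> n+1 \<Longrightarrow> has_partials (F j) (xF n F P Q j p) (tF n F P Q j p) p"
      "\<And>l. l \<le> n \<Longrightarrow> has_partials (P l) (xP n F P Q l p) (tP n F P Q l p) p"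
      "\<And>m. m \<le> n \<Longrightarrow> has_partials (Q m) (xQ n F P Q m p) (tQ n F P Q m p) p"
      using hpts[OF that] by auto
    have nzp: "F (n+1) p \<noteq> 0" using nz that by blast
    show ?thesis using pointwise[OF nzp h] by blast
  qed
  have CK: "\<And>k. Ck_on k U (P n) \<and> Ck_on k U (Q n) \<and> Ck_on k U (F (n+1))"
    using all_Ck[OF nz cs] by auto
  have ea: "a = (\<lambda>q. P n q / F (n+1) q)" unfolding a_def by (simp add: fun_eq_iff coef_a_def)
  have eb: "b = (\<lambda>q. - (Q n q / F (n+1) q))" unfolding b_def by (simp add: fun_eq_iff coef_b_def)
  have sa: "smooth_on2 U a" unfolding smooth_on2_def ea
    using CK nz by (auto intro!: Ck_divide)
  have sb: "smooth_on2 U b" unfolding smooth_on2_def eb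
    using CK nz by (auto intro!: Ck_divide Ck_uminus)
  have ex: "\<forall>x t. (x, t) \<in> U \<longrightarrow>
       ((\<lambda>y. a (y, t)) has_vector_derivative coef_c n F P Q (x, t)) (at x) \<and>
       ((\<lambda>y. coef_c n F P Q (y, t)) has_vector_derivative CX n F P Q (x, t)) (at x) \<and>
       ((\<lambda>s. a (x, s)) has_vector_derivative (\<lambda>p. tP n F P Q n p / F (n+1) p) (x, t)) (at t) \<and>
       ((\<lambda>y. b (y, t)) has_vector_derivative coef_d n F P Q (x, t)) (at x) \<and>
       ((\<lambda>y. coef_d n F P Q (y, t)) has_vector_derivative DX n F P Q (x, t)) (at x) \<and>
       ((\<lambda>s. b (x, s)) has_vector_derivative (\<lambda>p. - (tQ n F P Q n p / F (n+1) p)) (x, t)) (at t) \<and>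
       \<i> * (\<lambda>p. tP n F P Q n p / F (n+1) p) (x, t) + CX n F P Q (x, t) + 2 * (a (x, t))^2 * b (x, t) = 0 \<and>
       \<i> * (\<lambda>p. - (tQ n F P Q n p / F (n+1) p)) (x, t) - DX n F P Q (x, t) - 2 * (b (x, t))^2 * a (x, t) = 0"
  proof (intro allI impI)
    fix x t assume xt: "(x, t) \<in> U"
    from PW[OF xt] obtain ct dt where
      p1: "has_partials (coef_a n F P Q) (coef_c n F P Q (x,t)) (tP n F P Q n (x,t) / F (n+1) (x,t)) (x,t)"
      and p2: "has_partials (coef_c n F P Q) (CX n F P Q (x,t)) ct (x,t)"
      and p3: "has_partials (coef_b n F P Q) (coef_d n F P Q (x,t)) (- (tQ n F P Q n (x,t) / F (n+1) (x,t))) (x,t)"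
      and p4: "has_partials (coef_d n F P Q) (DX n F P Q (x,t)) dt (x,t)"
      and i1: "\<i> * (tP n F P Q n (x,t) / F (n+1) (x,t)) + CX n F P Q (x,t) + 2 * (coef_a n F P Q (x,t))^2 * coef_b n F P Q (x,t) = 0"
      and i2: "\<i> * (- (tQ n F P Q n (x,t) / F (n+1) (x,t))) - DX n F P Q (x,t) - 2 * (coef_b n F P Q (x,t))^2 * coef_a n F P Q (x,t) = 0"
      by blast
    show "((\<lambda>y. a (y, t)) has_vector_derivative coef_c n F P Q (x, t)) (at x) \<and>
       ((\<lambda>y. coef_c n F P Q (y, t)) has_vector_derivative CX n F P Q (x, t)) (at x) \<and>
       ((\<lambda>s. a (x, s)) has_vector_derivative (\<lambda>p. tP n F P Q n p / F (n+1) p) (x, t)) (at t) \<and>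
       ((\<lambda>y. b (y, t)) has_vector_derivative coef_d n F P Q (x, t)) (at x) \<and>
       ((\<lambda>y. coef_d n F P Q (y, t)) has_vector_derivative DX n F P Q (x, t)) (at x) \<and>
       ((\<lambda>s. b (x, s)) has_vector_derivative (\<lambda>p. - (tQ n F P Q n p / F (n+1) p)) (x, t)) (at t) \<and>
       \<i> * (\<lambda>p. tP n F P Q n p / F (n+1) p) (x, t) + CX n F P Q (x, t) + 2 * (a (x, t))^2 * b (x, t) = 0 \<and>
       \<i> * (\<lambda>p. - (tQ n F P Q n p / F (n+1) p)) (x, t) - DX n F P Q (x, t) - 2 * (b (x, t))^2 * a (x, t) = 0"
      unfolding a_def b_def
      using hp_slice_x[OF p1] hp_slice_x[OF p2] hp_slice_t[OF p1] hp_slice_x[OF p3] hp_slice_x[OF p4] hp_slice_t[OF p3] i1 i2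
      by simp
  qed
  show ?thesis
    apply (intro conjI sa sb)
    apply (rule exI[of _ "coef_c n F P Q"], rule exI[of _ "CX n F P Q"], rule exI[of _ "\<lambda>p. tP n F P Q n p / F (n+1) p"])
    apply (rule exI[of _ "coef_d n F P Q"], rule exI[of _ "DX n F P Q"], rule exI[of _ "\<lambda>p. - (tQ n F P Q n p / F (n+1) p)"])
    by (rule ex)
qed

end
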